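(* Let $n$ be even and $k\in\mathbb N$. Let $G$ be the graph on vertex set $V=\{0,\dots,n-1\}\times\{1,\dots,k\}$ in which $(u,i)$ and $(v,j)$ are adjacent iff $v\equiv u\pm1\pmod n$, together with one additional edge $e^*$ between $(0,1)$ and $(n/2,1)$. Define $x_0\in\mathbb R^V$ by $x_0(u,i)=\min(u,n-u)$ and, for $w\in\{0,\dots,n-1\}$, $x_w(u,i)=x_0((u-w)\bmod n,\ i)$; let $X=\sum_{w=0}^{n-1}x_wx_w^\top$. Then every vertex of $G$ has degree at least $2k$ and the minimum cut of $G$ is $2k$; all diagonal entries of $X$ are equal to a common value $D>0$, so $\hat X=X/D$ is symmetric positive semidefinite with unit diagonal; $\langle X,L_{e^*}\rangle=2\sum_{w=0}^{n/2-1}(\frac n2-2w)^2=\Theta(n^3)$; and $\langle X,L_{G\setminus e^*}\rangle=n^2k^2$. Consequently, if $k=o(\sqrt n)$, then $\langle\hat X,L_{e^*}\rangle\ge(1-o(1))\langle\hat X,L_G\rangle$, and for any $\eta\in(0,1)$ and $H$ a random subgraph of $G$ keeping each edge independently with probability $\eta$, with probability at least $\eta$ we have $\langle\hat X,L_H\rangle\ge(1-o(1))\langle\hat X,L_G\rangle$.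
   Context: $L_G$ denotes the unnormalized Laplacian $D_G-A_G$; for a single edge $e=\{a,b\}$, $L_e=(e_a-e_b)(e_a-e_b)^\top$; $G\setminus e^*$ is $G$ with the edge $e^*$ removed; $\langle A,B\rangle=\mathrm{tr}(A^\top B)$. Asymptotics are as $n\to\infty$. *)

theory Defs
  imports "HOL-Probability.Probability" "HOL-Library.Landau_Symbols"
begin

type_synonym vtx = "nat \<times> nat"

definition cverts :: "nat \<Rightarrow> nat \<Rightarrow> vtx set" where
  "cverts n k = {0..<n} \<times> {1..k}"

definition cadj :: "nat \<Rightarrow> vtx \<Rightarrow> vtx \<Rightarrow> bool" where
  "cadj n p q = (int (fst q) mod int n = (int (fst p) + 1) mod int n \<or>
                 int (fst q) mod int n = (int (fst p) - 1) mod int n)"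

definition estar :: "nat \<Rightarrow> vtx set" where
  "estar n = {(0, 1), (n div 2, 1)}"

definition ring_edges :: "nat \<Rightarrow> nat \<Rightarrow> vtx set set" where
  "ring_edges n k = {{p, q} | p q. p \<in> cverts n k \<and> q \<in> cverts n k \<and> cadj n p q}"

definition G_edges :: "nat \<Rightarrow> nat \<Rightarrow> vtx set set" where
  "G_edges n k = insert (estar n) (ring_edges n k)"

definition deg :: "'v set set \<Rightarrow> 'v \<Rightarrow> nat" where
  "deg E v = card {e \<in> E. v \<in> e}"

definition cut_size :: "'v set set \<Rightarrow> 'v set \<Rightarrow> nat" where
  "cut_size E S = card {e \<in> E. e \<inter> S \<noteq> {} \<and> \<not> e \<subseteq> S}"

definition min_cut :: "'v set \<Rightarrow> 'v set set \<Rightarrow> nat" where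
  "min_cut V E = Min (cut_size E ` {S. S \<subseteq> V \<and> S \<noteq> {} \<and> S \<noteq> V})"

definition lap :: "'v set set \<Rightarrow> 'v \<Rightarrow> 'v \<Rightarrow> real" where
  "lap E p q = (if p = q then real (deg E p) else 0) - (if {p, q} \<in> E then 1 else 0)"

definition ind :: "'v \<Rightarrow> 'v \<Rightarrow> real" where
  "ind a p = (if p = a then 1 else 0)"

definition lap_edge :: "'v \<Rightarrow> 'v \<Rightarrow> 'v \<Rightarrow> 'v \<Rightarrow> real" where
  "lap_edge a b p q = (ind a p - ind b p) * (ind a q - ind b q)"

definition inner_mat :: "'v set \<Rightarrow> ('v \<Rightarrow> 'v \<Rightarrow> real) \<Rightarrow> ('v \<Rightarrow> 'v \<Rightarrow> real) \<Rightarrow> real" where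
  "inner_mat V A B = (\<Sum>p\<in>V. \<Sum>q\<in>V. A p q * B p q)"

definition psd :: "'v set \<Rightarrow> ('v \<Rightarrow> 'v \<Rightarrow> real) \<Rightarrow> bool" where
  "psd V A = ((\<forall>p\<in>V. \<forall>q\<in>V. A p q = A q p) \<and>
              (\<forall>z :: 'v \<Rightarrow> real. (\<Sum>p\<in>V. \<Sum>q\<in>V. z p * A p q * z q) \<ge> 0))"

definition x0 :: "nat \<Rightarrow> vtx \<Rightarrow> real" where
  "x0 n p = real (min (fst p) (n - fst p))"

definition xvec :: "nat \<Rightarrow> nat \<Rightarrow> vtx \<Rightarrow> real" where
  "xvec n w p = x0 n (nat ((int (fst p) - int w) mod int n), snd p)"

definition Xmat :: "nat \<Rightarrow> vtx \<Rightarrow> vtx \<Rightarrow> real" where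
  "Xmat n p q = (\<Sum>w<n. xvec n w p * xvec n w q)"

text \<open>The common diagonal value D (read off at vertex (0,1)) and X-hat = X / D.\<close>
definition Dval :: "nat \<Rightarrow> real" where
  "Dval n = Xmat n (0, 1) (0, 1)"

definition Xhat :: "nat \<Rightarrow> vtx \<Rightarrow> vtx \<Rightarrow> real" where
  "Xhat n p q = Xmat n p q / Dval n"

definition evenF :: "nat filter" where
  "evenF = inf at_top (principal {n. even n})"

end

theory Submission
  imports Defs
begin

lemma card_filter_sum: "finite A \<Longrightarrow> real (card {x\<in>A. P x}) = (\<Sum>x\<in>A. if P x then 1 else 0)"
  by (simp add: sum.inter_filter[symmetric])

lemma no_self: assumes "\<forall>e\<in>E. \<exists>a\<in>V. \<exists>b\<in>V. a \<noteq> b \<and> e = {a,b}" shows "{p} \<notin> E"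
proof
  assume "{p} \<in> E" then obtain a b where "a \<noteq> b" "{p} = {a,b}" using assms by blast
  then show False by (simp add: doubleton_eq_iff)
qed

lemma deg_card:
  assumes fin: "finite V" and Eok: "\<forall>e\<in>E. \<exists>a\<in>V. \<exists>b\<in>V. a \<noteq> b \<and> e = {a,b}" and p: "p \<in> V"
  shows "deg E p = card {q\<in>V. {p,q} \<in> E}"
proof -
  have ne: "x \<noteq> p" if "{p,x} \<in> E" for x
    using no_self[OF Eok, of p] that by auto
  have "bij_betw (\<lambda>q. {p,q}) {q\<in>V. {p,q} \<in> E} {e\<in>E. p \<in> e}"
  proof (rule bij_betwI')
    fix x y assume "x \<in> {q\<in>V. {p,q}\<in>E}" "y \<in> {q\<in>V. {p,q}\<in>E}"
    then have "x \<noteq> p" "y\<noteq>p" using ne by auto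
    then show "({p,x} = {p,y}) = (x = y)" by (auto simp: doubleton_eq_iff)
  next
    fix x assume "x\<in>{q\<in>V. {p,q}\<in>E}" then show "{p,x}\<in>{e\<in>E. p\<in>e}" by auto
  next
    fix e assume e: "e\<in>{e\<in>E. p\<in>e}"
    then obtain a b where ab: "a\<in>V" "b\<in>V" "a\<noteq>b" "e={a,b}" using Eok by blast
    have "e \<in> E" "p \<in> e" using e by auto
    show "\<exists>x\<in>{q\<in>V. {p,q}\<in>E}. e = {p,x}"
    proof (cases "p = a")
      case True then show ?thesis using ab \<open>e \<in> E\<close> by (intro bexI[of _ b]) auto
    next
      case False then have "p = b" using ab \<open>p \<in> e\<close> by auto
      then show ?thesis using ab \<open>e \<in> E\<close> by (intro bexI[of _ a]) (auto simp: insert_commute)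
    qed
  qed
  then show ?thesis unfolding deg_def by (simp add: bij_betw_same_card)
qed
lemma inner_lap_gram:
  fixes x :: "'w \<Rightarrow> 'v \<Rightarrow> real"
  assumes fin: "finite V" "finite W" and Eok: "\<forall>e\<in>E. \<exists>a\<in>V. \<exists>b\<in>V. a \<noteq> b \<and> e = {a,b}"
  shows "inner_mat V (\<lambda>p q. \<Sum>w\<in>W. x w p * x w q) (lap E)
     = (\<Sum>p\<in>V. \<Sum>q\<in>V. if {p,q}\<in>E then (\<Sum>w\<in>W. (x w p - x w q)^2) else 0) / 2"
proof -
  define A where "A = (\<lambda>p q. \<Sum>w\<in>W. x w p * x w q)"
  have noself: "{p,p} \<notin> E" for p using no_self[OF Eok] by simp
  have row: "(\<Sum>q\<in>V. A p q * lap E p q) = (\<Sum>q\<in>V. if {p,q}\<in>E then A p p - A p q else 0)"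
    if p: "p \<in> V" for p
  proof -
    have "(\<Sum>q\<in>V. A p q * lap E p q)
       = (\<Sum>q\<in>V. A p q * (if p = q then real (deg E p) else 0)) - (\<Sum>q\<in>V. if {p,q}\<in>E then A p q else 0)"
    proof -
      have "\<And>q. A p q * lap E p q = A p q * (if p = q then real (deg E p) else 0) - (if {p,q}\<in>E then A p q else 0)"
        unfolding lap_def by (simp add: right_diff_distrib)
      then show ?thesis by (simp add: sum_subtractf)
    qed
    also have "(\<Sum>q\<in>V. A p q * (if p = q then real (deg E p) else 0)) = A p p * real (deg E p)"
      using p fin by (simp add: if_distrib cong: if_cong)
    also have "real (deg E p) = (\<Sum>q\<in>V. if {p,q}\<in>E then 1 else 0)"
      using deg_card[OF fin(1) Eok p] card_filter_sum[OF fin(1)] by simp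
    finally show ?thesis
      by (simp add: sum_distrib_left sum_subtractf[symmetric] if_distrib cong: if_cong)
  qed
  define T where "T = (\<Sum>p\<in>V. \<Sum>q\<in>V. if {p,q}\<in>E then A p p - A p q else 0)"
  have I: "inner_mat V A (lap E) = T" unfolding inner_mat_def T_def using row by simp
  have "T = (\<Sum>q\<in>V. \<Sum>p\<in>V. if {p,q}\<in>E then A p p - A p q else 0)"
    unfolding T_def by (rule sum.swap)
  also have "\<dots> = (\<Sum>p\<in>V. \<Sum>q\<in>V. if {p,q}\<in>E then A q q - A q p else 0)"
    by (simp add: insert_commute)
  finally have T2: "T = \<dots>" .
  have "2 * T = (\<Sum>p\<in>V. \<Sum>q\<in>V. if {p,q}\<in>E then (A p p - A p q) + (A q q - A q p) else 0)"
    by (subst mult_2, subst T2, subst (1) T_def) (simp add: sum.distrib[symmetric] if_distrib cong: if_cong)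
  also have "\<dots> = (\<Sum>p\<in>V. \<Sum>q\<in>V. if {p,q}\<in>E then (\<Sum>w\<in>W. (x w p - x w q)^2) else 0)"
    unfolding A_def
    by (intro sum.cong refl) (simp add: sum_subtractf[symmetric] sum.distrib[symmetric] power2_eq_square algebra_simps)
  finally show ?thesis using I unfolding A_def by simp
qed



lemma mod_suc: "(t::nat) < n \<Longrightarrow> (t + 1) mod n = (if t + 1 < n then t + 1 else 0)"
proof (cases "t + 1 < n")
  case True then show ?thesis by simp
next
  case False assume "t < n" then have "t + 1 = n" using False by simp
  then show ?thesis using False by simp
qed

lemma mod_pred: "(t::nat) < n \<Longrightarrow> (t + n - 1) mod n = (if t = 0 then n - 1 else t - 1)"
proof (cases "t = 0")
  case True assume "t < n" then show ?thesis using True by simp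
next
  case False assume "t < n"
  then have e: "t + n - 1 = (t - 1) + n" using False by simp
  have "((t - 1) + n) mod n = t - 1" using \<open>t<n\<close> by simp
  then show ?thesis using False by (simp only: e) simp
qed

lemma int_pred_mod: "n \<ge> 1 \<Longrightarrow> (int u - 1) mod int n = int ((u + n - 1) mod n)"
proof -
  assume n: "n \<ge> 1"
  have "int ((u + n - 1) mod n) = int (u + n - 1) mod int n" by (simp add: zmod_int)
  also have "int (u + n - 1) = (int u - 1) + int n" using n by simp
  also have "((int u - 1) + int n) mod int n = (int u - 1) mod int n" by (rule mod_add_self2)
  finally show ?thesis by simp
qed

lemma cadj_iff:
  assumes n: "n \<ge> 3" and q: "fst q < n"
  shows "cadj n p q \<longleftrightarrow> fst q = (fst p + 1) mod n \<or> fst q = (fst p + n - 1) mod n"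
proof -
  have a: "int (fst q) mod int n = int (fst q)" using q by simp
  have b: "(int (fst p) + 1) mod int n = int ((fst p + 1) mod n)"
    using zmod_int[of "fst p + 1" n] by (simp add: ac_simps)
  have c: "(int (fst p) - 1) mod int n = int ((fst p + n - 1) mod n)" using n int_pred_mod by simp
  show ?thesis unfolding cadj_def a b c by simp
qed

lemma cadj_sym: "cadj n p q = cadj n q p"
proof -
  have e: "(a mod int n = b mod int n) = (int n dvd a - b)" for a b by (rule mod_eq_dvd_iff)
  have 1: "int n dvd a - (b + 1) \<longleftrightarrow> int n dvd b - (a - 1)" for a b :: int
  proof -
    have "b - (a - 1) = - (a - (b + 1))" by simp
    then show ?thesis by (simp only: dvd_minus_iff)
  qed
  have 2: "int n dvd a - (b - 1) \<longleftrightarrow> int n dvd b - (a + 1)" for a b :: int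
  proof -
    have "b - (a + 1) = - (a - (b - 1))" by simp
    then show ?thesis by (simp only: dvd_minus_iff)
  qed
  show ?thesis unfolding cadj_def e using 1 2 by blast
qed

lemma cadj_ne: assumes "n \<ge> 2" shows "\<not> cadj n p p"
proof
  assume "cadj n p p"
  then have "int n dvd 1 \<or> int n dvd -1"
    unfolding cadj_def mod_eq_dvd_iff by (auto simp: algebra_simps dvd_minus_iff)
  then have "int n dvd 1" by simp
  then have "int n = 1" by simp
  then show False using assms by simp
qed

lemma ring_mem:
  assumes "p \<in> cverts n k" "q \<in> cverts n k"
  shows "{p,q} \<in> ring_edges n k \<longleftrightarrow> cadj n p q"
proof
  assume "{p,q} \<in> ring_edges n k"
  then obtain p' q' where "{p,q} = {p',q'}" "cadj n p' q'" unfolding ring_edges_def by blast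
  then show "cadj n p q" by (auto simp: doubleton_eq_iff cadj_sym)
next
  assume "cadj n p q" then show "{p,q} \<in> ring_edges n k" using assms unfolding ring_edges_def by blast
qed

lemma fin_V: "finite (cverts n k)" unfolding cverts_def by simp

lemma card_V: "card (cverts n k) = n * k" unfolding cverts_def by (simp add: card_cartesian_product)

lemma ring_ok:
  assumes "n \<ge> 2"
  shows "\<forall>e\<in>ring_edges n k. \<exists>a\<in>cverts n k. \<exists>b\<in>cverts n k. a \<noteq> b \<and> e = {a,b}"
proof
  fix e assume "e \<in> ring_edges n k"
  then obtain p q where pq: "e = {p,q}" "p \<in> cverts n k" "q \<in> cverts n k" "cadj n p q"
    unfolding ring_edges_def by blast
  have "p \<noteq> q" using cadj_ne[OF assms, of p] pq(4) by blast
  then show "\<exists>a\<in>cverts n k. \<exists>b\<in>cverts n k. a \<noteq> b \<and> e = {a,b}" using pq by blast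
qed

lemma estar_in: assumes "n \<ge> 4" "1 \<le> k" shows "(0,1) \<in> cverts n k" "(n div 2, 1) \<in> cverts n k"
  using assms unfolding cverts_def by auto

lemma G_ok:
  assumes "n \<ge> 4" "1 \<le> k"
  shows "\<forall>e\<in>G_edges n k. \<exists>a\<in>cverts n k. \<exists>b\<in>cverts n k. a \<noteq> b \<and> e = {a,b}"
proof -
  have ne: "(0::nat,1::nat) \<noteq> (n div 2, 1)" using assms by auto
  have "\<exists>a\<in>cverts n k. \<exists>b\<in>cverts n k. a \<noteq> b \<and> estar n = {a,b}"
    unfolding estar_def using estar_in[OF assms] ne by blast
  then show ?thesis using ring_ok[of n k] assms unfolding G_edges_def by auto
qed

lemma fin_ring: "finite (ring_edges n k)"
proof -
  have "ring_edges n k \<subseteq> (\<lambda>(p,q). {p,q}) ` (cverts n k \<times> cverts n k)"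
    unfolding ring_edges_def by auto
  then show ?thesis using fin_V by (meson finite_SigmaI finite_imageI finite_subset)
qed

lemma fin_G: "finite (G_edges n k)" unfolding G_edges_def using fin_ring by simp

lemma estar_notin: assumes "n \<ge> 4" "even n" "1 \<le> k" shows "estar n \<notin> ring_edges n k"
proof
  assume "estar n \<in> ring_edges n k"
  then have "cadj n (0,1) (n div 2, 1)" using ring_mem[OF estar_in[OF assms(1,3)]] unfolding estar_def by simp
  then have "n div 2 = 1 mod n \<or> n div 2 = (n - 1) mod n" using cadj_iff[of n "(n div 2,1)" "(0,1)"] assms by simp
  then show False using assms by auto
qed

lemma G_minus: assumes "n \<ge> 4" "even n" "1 \<le> k" shows "G_edges n k - {estar n} = ring_edges n k"
  using estar_notin[OF assms] unfolding G_edges_def by auto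

lemma nbrs:
  assumes n: "n \<ge> 3" and p: "p \<in> cverts n k"
  shows "{q\<in>cverts n k. cadj n p q} = {(fst p + 1) mod n, (fst p + n - 1) mod n} \<times> {1..k}"
proof -
  have "fst q < n" if "q \<in> cverts n k" for q using that unfolding cverts_def by auto
  moreover have "(fst p + 1) mod n < n" "(fst p + n - 1) mod n < n" using n by auto
  ultimately show ?thesis using cadj_iff[OF n] unfolding cverts_def by (cases p) auto
qed

lemma nbr_distinct: assumes "(n::nat) \<ge> 3" "(u::nat) < n" shows "(u + 1) mod n \<noteq> (u + n - 1) mod n"
  unfolding mod_suc[OF assms(2)] mod_pred[OF assms(2)] using assms by auto

lemma card_nbrs:
  assumes n: "n \<ge> 3" and p: "p \<in> cverts n k"
  shows "card {q\<in>cverts n k. cadj n p q} = 2 * k"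
proof -
  have "fst p < n" using p unfolding cverts_def by auto
  then show ?thesis unfolding nbrs[OF n p] using nbr_distinct[OF n] by (simp add: card_cartesian_product)
qed

lemma deg_ring:
  assumes n: "n \<ge> 3" and p: "p \<in> cverts n k"
  shows "deg (ring_edges n k) p = 2 * k"
proof -
  have "deg (ring_edges n k) p = card {q\<in>cverts n k. {p,q} \<in> ring_edges n k}"
    using deg_card[OF fin_V ring_ok p] n by simp
  also have "{q\<in>cverts n k. {p,q} \<in> ring_edges n k} = {q\<in>cverts n k. cadj n p q}"
    using ring_mem p by blast
  finally show ?thesis using card_nbrs[OF n p] by simp
qed

lemma deg_G:
  assumes n: "n \<ge> 4" and p: "p \<in> cverts n k"
  shows "2 * k \<le> deg (G_edges n k) p"
proof -
  have "deg (ring_edges n k) p \<le> deg (G_edges n k) p"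
    unfolding deg_def G_edges_def by (rule card_mono) (use fin_G[unfolded G_edges_def] in auto)
  then show ?thesis using deg_ring[OF _ p] n by simp
qed



lemma cycle_all:
  assumes n: "(n::nat) > 0" and u0: "u0 < n" "P u0" and step: "\<forall>u<n. P u \<longrightarrow> P ((u + 1) mod n)"
  shows "\<forall>u<n. P u"
proof -
  have all: "P ((u0 + m) mod n)" for m
  proof (induction m)
    case 0 then show ?case using u0 by simp
  next
    case (Suc m)
    have "(u0 + Suc m) mod n = ((u0 + m) mod n + 1) mod n" by (simp add: mod_Suc_eq)
    then show ?case using step Suc n by simp
  qed
  show ?thesis
  proof (intro allI impI)
    fix u assume u: "u < n"
    have "(u0 + (u + n - u0)) mod n = u" using u u0 by simp
    then show "P u" using all[of "u + n - u0"] by simp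
  qed
qed

lemma cycle_ex:
  assumes "(n::nat) > 0" "u0 < n" "P u0" "\<not> (\<forall>u<n. P u)"
  shows "\<exists>u<n. P u \<and> \<not> P ((u + 1) mod n)"
  using cycle_all[of n u0 P] assms by blast

lemma cadj_fst: "fst p = fst p' \<Longrightarrow> fst q = fst q' \<Longrightarrow> cadj n p q = cadj n p' q'"
  unfolding cadj_def by simp

lemma suc_suc_ne: assumes "(n::nat) \<ge> 3" "u < n" shows "((u + 1) mod n + 1) mod n \<noteq> u"
proof -
  have a: "(u + 1) mod n < n" using assms by simp
  show ?thesis
    unfolding mod_suc[OF a] unfolding mod_suc[OF assms(2)] using assms by auto
qed

lemma cut_lb:
  assumes n: "n \<ge> 4" and k: "1 \<le> k" and S: "S \<subseteq> cverts n k" "S \<noteq> {}" "S \<noteq> cverts n k"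
  shows "2 * k \<le> cut_size (G_edges n k) S"
proof -
  define V where "V = cverts n k"
  define C where "C = {e\<in>ring_edges n k. e \<inter> S \<noteq> {} \<and> \<not> e \<subseteq> S}"
  have CG: "card C \<le> cut_size (G_edges n k) S"
    unfolding cut_size_def C_def G_edges_def
    by (rule card_mono) (use fin_G[unfolded G_edges_def] in auto)
  have finC: "finite C" unfolding C_def using fin_ring by simp
  have inV: "(a, b) \<in> V \<longleftrightarrow> a < n \<and> 1 \<le> b \<and> b \<le> k" for a b unfolding V_def cverts_def by auto
  have n3: "n \<ge> 3" using n by simp
  show ?thesis
  proof (cases "\<exists>u i j. (u,i) \<in> S \<and> (u,j) \<notin> S \<and> 1 \<le> j \<and> j \<le> k")
    case True
    then obtain u i j where uij: "(u,i) \<in> S" "(u,j) \<notin> S" "1 \<le> j" "j \<le> k" by blast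
    define a where "a = (u,i)"
    define b where "b = (u,j)"
    have aV: "a \<in> V" using uij S unfolding a_def V_def by auto
    then have bV: "b \<in> V" using uij unfolding a_def b_def inV by auto
    define N where "N = {q\<in>V. cadj n a q}"
    have cN: "card N = 2 * k" unfolding N_def V_def using card_nbrs[OF n3] aV V_def by simp
    define f where "f w = (if w \<in> S then {w,b} else {w,a})" for w
    have adj: "cadj n a w" "cadj n b w" "w \<in> V" "w \<noteq> a" "w \<noteq> b" if "w \<in> N" for w
    proof -
      show aw: "cadj n a w" "w \<in> V" using that unfolding N_def by auto
      show "cadj n b w" using aw(1) cadj_fst[of b a w w n] unfolding a_def b_def by simp
      show "w \<noteq> a" using aw(1) cadj_ne[of n a] n by auto
      show "w \<noteq> b"
      proof
        assume "w = b"
        then have "cadj n w w" using aw(1) cadj_fst[of a w w w n] unfolding a_def b_def by simp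
        then show False using cadj_ne[of n w] n by simp
      qed
    qed
    have fC: "f w \<in> C" if "w \<in> N" for w
    proof (cases "w \<in> S")
      case True
      have "{w,b} \<in> ring_edges n k"
        using ring_mem[of w n k b] adj[OF that] cadj_sym[of n b w] unfolding V_def by (simp add: bV[unfolded V_def])
      then show ?thesis unfolding f_def C_def using True uij unfolding b_def by auto
    next
      case False
      have "{w,a} \<in> ring_edges n k"
        using ring_mem[of w n k a] adj[OF that] cadj_sym[of n a w] unfolding V_def by (simp add: aV[unfolded V_def])
      then show ?thesis unfolding f_def C_def using False uij unfolding a_def by auto
    qed
    have inj: "inj_on f N"
    proof (rule inj_onI)
      fix w w' assume w: "w \<in> N" "w' \<in> N" "f w = f w'"
      have "w \<in> f w" unfolding f_def by auto
      then have "w \<in> f w'" using w by simp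
      then show "w = w'" using adj[OF w(1)] unfolding f_def by (auto split: if_splits)
    qed
    have "card (f ` N) \<le> card C" using fC finC by (intro card_mono) auto
    then show ?thesis using card_image[OF inj] cN CG by simp
  next
    case False
    have layer: "(u,j) \<in> S \<longleftrightarrow> (u,1) \<in> S" if "1 \<le> j" "j \<le> k" for u j
    proof (rule ccontr)
      assume "\<not> ?thesis"
      then have "((u,j)\<in>S \<and> (u,1)\<notin>S \<and> 1\<le>(1::nat) \<and> (1::nat)\<le>k) \<or> ((u,1)\<in>S \<and> (u,j)\<notin>S \<and> 1\<le>j \<and> j\<le>k)"
        using that k by auto
      then show False using False by blast
    qed
    have V_in: "p \<in> cverts n k \<Longrightarrow> p \<in> S \<longleftrightarrow> (fst p, 1) \<in> S" for p
      unfolding cverts_def using layer[of "snd p" "fst p"] by (cases p) auto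
    have V_fst: "p \<in> cverts n k \<Longrightarrow> fst p < n" for p unfolding cverts_def by auto
    have V_one: "u < n \<Longrightarrow> (u, 1) \<in> cverts n k" for u unfolding cverts_def using k by auto
    obtain p where p: "p \<in> S" using S(2) by blast
    have pV: "p \<in> cverts n k" using p S(1) by blast
    obtain q where q: "q \<in> cverts n k" "q \<notin> S" using S(1,3) by blast
    have ex1: "\<exists>u<n. (u,1) \<in> S \<and> ((u + 1) mod n, 1) \<notin> S"
    proof (rule cycle_ex[of n "fst p" "\<lambda>u. (u,1) \<in> S"])
      show "0 < n" "fst p < n" using n V_fst[OF pV] by auto
      show "(fst p, 1) \<in> S" using V_in[OF pV] p by simp
      show "\<not> (\<forall>u<n. (u, 1) \<in> S)" using q V_in[OF q(1)] V_fst[OF q(1)] by auto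
    qed
    have ex2: "\<exists>u<n. (u,1) \<notin> S \<and> ((u + 1) mod n, 1) \<in> S"
    proof -
      have "\<exists>u<n. (u,1) \<notin> S \<and> \<not> ((u + 1) mod n, 1) \<notin> S"
      proof (rule cycle_ex[of n "fst q" "\<lambda>u. (u,1) \<notin> S"])
        show "0 < n" "fst q < n" using n V_fst[OF q(1)] by auto
        show "(fst q, 1) \<notin> S" using V_in[OF q(1)] q by simp
        show "\<not> (\<forall>u<n. (u, 1) \<notin> S)" using p V_in[OF pV] V_fst[OF pV] by auto
      qed
      then show ?thesis by simp
    qed
    obtain u1 where u1: "u1 < n" "(u1,1) \<in> S" "((u1 + 1) mod n, 1) \<notin> S" using ex1 by blast
    obtain u2 where u2: "u2 < n" "(u2,1) \<notin> S" "((u2 + 1) mod n, 1) \<in> S" using ex2 by blast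
    define E1 where "E1 = (\<lambda>j. {(u1,1), ((u1 + 1) mod n, j)}) ` {1..k}"
    define E2 where "E2 = (\<lambda>j. {((u2 + 1) mod n, 1), (u2, j)}) ` {1..k}"
    have out1: "((u1 + 1) mod n, j) \<notin> S" if "j \<in> {1..k}" for j using layer[of j "(u1 + 1) mod n"] u1 that by simp
    have out2: "(u2, j) \<notin> S" if "j \<in> {1..k}" for j using layer[of j u2] u2 that by simp
    have m1: "(u1 + 1) mod n < n" "(u2 + 1) mod n < n" using n by auto
    have E1C: "E1 \<subseteq> C"
    proof
      fix e assume "e \<in> E1"
      then obtain j where j: "j \<in> {1..k}" "e = {(u1,1), ((u1 + 1) mod n, j)}" unfolding E1_def by blast
      have "cadj n (u1,1) ((u1 + 1) mod n, j)" using cadj_iff[OF n3] m1 by simp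
      moreover have "(u1,1) \<in> cverts n k" "((u1 + 1) mod n, j) \<in> cverts n k"
        using u1(1) m1 k j unfolding cverts_def by auto
      ultimately have "e \<in> ring_edges n k" using ring_mem j(2) by blast
      then show "e \<in> C" unfolding C_def using j u1 out1[OF j(1)] by auto
    qed
    have E2C: "E2 \<subseteq> C"
    proof
      fix e assume "e \<in> E2"
      then obtain j where j: "j \<in> {1..k}" "e = {((u2 + 1) mod n, 1), (u2, j)}" unfolding E2_def by blast
      have "cadj n (u2,j) ((u2 + 1) mod n, 1)" using cadj_iff[OF n3] m1 by simp
      then have "cadj n ((u2 + 1) mod n, 1) (u2,j)" using cadj_sym[of n "(u2,j)"] by simp
      moreover have "(u2,j) \<in> cverts n k" "((u2 + 1) mod n, 1) \<in> cverts n k"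
        using u2(1) m1 k j unfolding cverts_def by auto
      ultimately have "e \<in> ring_edges n k" using ring_mem j(2) by blast
      then show "e \<in> C" unfolding C_def using j u2 out2[OF j(1)] by auto
    qed
    have inj1: "inj_on (\<lambda>j. {(u1,1), ((u1 + 1) mod n, j)}) {1..k}"
    proof (rule inj_onI)
      fix j j' assume jj: "j \<in> {1..k}" "j' \<in> {1..k}" "{(u1,1), ((u1 + 1) mod n, j)} = {(u1,1), ((u1 + 1) mod n, j')}"
      have "((u1 + 1) mod n, j) \<noteq> (u1,1)" using out1[OF jj(1)] u1 by auto
      then show "j = j'" using jj(3) by (auto simp: doubleton_eq_iff)
    qed
    have inj2: "inj_on (\<lambda>j. {((u2 + 1) mod n, 1), (u2, j)}) {1..k}"
    proof (rule inj_onI)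
      fix j j' assume jj: "j \<in> {1..k}" "j' \<in> {1..k}" "{((u2 + 1) mod n, 1), (u2, j)} = {((u2 + 1) mod n, 1), (u2, j')}"
      have "(u2, j) \<noteq> ((u2 + 1) mod n, 1)" using out2[OF jj(1)] u2 by auto
      then show "j = j'" using jj(3) by (auto simp: doubleton_eq_iff)
    qed
    have disj: "E1 \<inter> E2 = {}"
    proof (rule ccontr)
      assume "E1 \<inter> E2 \<noteq> {}"
      then obtain j j' where jj: "j \<in> {1..k}" "j' \<in> {1..k}"
        "{(u1,1), ((u1 + 1) mod n, j)} = {((u2 + 1) mod n, 1), (u2, j')}"
        unfolding E1_def E2_def by blast
      have "(u1,1) \<noteq> (u2, j')" using u1 out2[OF jj(2)] by auto
      then have "u1 = (u2 + 1) mod n" "(u1 + 1) mod n = u2" using jj(3) by (auto simp: doubleton_eq_iff)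
      then show False using suc_suc_ne[OF n3 u2(1)] by simp
    qed
    have "card (E1 \<union> E2) = 2 * k"
      using disj card_image[OF inj1] card_image[OF inj2] unfolding E1_def E2_def
      by (simp add: card_Un_disjoint)
    moreover have "card (E1 \<union> E2) \<le> card C" using E1C E2C finC by (intro card_mono) auto
    ultimately show ?thesis using CG by simp
  qed
qed

lemma cut_single:
  assumes Eok: "\<forall>e\<in>E. \<exists>a\<in>V. \<exists>b\<in>V. a \<noteq> b \<and> e = {a,b}"
  shows "cut_size E {v} = deg E v"
proof -
  have "{e\<in>E. e \<inter> {v} \<noteq> {} \<and> \<not> e \<subseteq> {v}} = {e\<in>E. v \<in> e}"
  proof (intro set_eqI iffI)
    fix e assume "e \<in> {e\<in>E. v \<in> e}"
    then have ev: "v \<in> e" "e \<in> E" by auto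
    then obtain a b where ab: "a \<noteq> b" "e = {a,b}" using Eok by blast
    have "\<not> e \<subseteq> {v}" using ab by auto
    moreover have "e \<inter> {v} \<noteq> {}" using ev by auto
    ultimately show "e \<in> {e\<in>E. e \<inter> {v} \<noteq> {} \<and> \<not> e \<subseteq> {v}}" using ev by blast
  next
    fix e assume "e \<in> {e\<in>E. e \<inter> {v} \<noteq> {} \<and> \<not> e \<subseteq> {v}}"
    then show "e \<in> {e\<in>E. v \<in> e}" by blast
  qed
  then show ?thesis unfolding cut_size_def deg_def by simp
qed

lemma min_cut_G:
  assumes n: "n \<ge> 4" and k: "1 \<le> k"
  shows "min_cut (cverts n k) (G_edges n k) = 2 * k"
proof -
  define F where "F = {S. S \<subseteq> cverts n k \<and> S \<noteq> {} \<and> S \<noteq> cverts n k}"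
  have finF: "finite F"
    by (rule finite_subset[of _ "Pow (cverts n k)"]) (auto simp: F_def fin_V)
  have v: "(1::nat,1::nat) \<in> cverts n k" "(0::nat,1::nat) \<in> cverts n k" using n k unfolding cverts_def by auto
  have vF: "{(1::nat,1::nat)} \<in> F" unfolding F_def using v by auto
  have "(1::nat,1::nat) \<notin> estar n" using n unfolding estar_def by auto
  then have "{e\<in>G_edges n k. (1,1) \<in> e} = {e\<in>ring_edges n k. (1,1) \<in> e}" unfolding G_edges_def by auto
  then have "deg (G_edges n k) (1,1) = 2 * k" using deg_ring[of n "(1,1)" k] v n unfolding deg_def by simp
  then have c: "cut_size (G_edges n k) {(1,1)} = 2 * k" using cut_single[OF G_ok[OF n k]] by simp
  show ?thesis unfolding min_cut_def F_def[symmetric]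
  proof (rule Min_eqI)
    show "finite (cut_size (G_edges n k) ` F)" using finF by simp
    show "\<And>y. y \<in> cut_size (G_edges n k) ` F \<Longrightarrow> 2 * k \<le> y" using cut_lb[OF n k] unfolding F_def by blast
    show "2 * k \<in> cut_size (G_edges n k) ` F" using vF c by force
  qed
qed



definition xi :: "nat \<Rightarrow> nat \<Rightarrow> real" where "xi n t = real (min t (n - t))"
definition rr :: "nat \<Rightarrow> int \<Rightarrow> nat" where "rr n a = nat (a mod int n)"
definition Qf :: "nat \<Rightarrow> vtx \<Rightarrow> vtx \<Rightarrow> real" where
  "Qf n p q = (\<Sum>w<n. (xvec n w p - xvec n w q)^2)"

lemma xvec_eq: "xvec n w p = xi n (rr n (int (fst p) - int w))"
  by (simp add: xvec_def x0_def xi_def rr_def)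

lemma rr_int: "n > 0 \<Longrightarrow> int (rr n a) = a mod int n"
  unfolding rr_def by simp

lemma rr_lt: "n > 0 \<Longrightarrow> rr n a < n"
  unfolding rr_def by (simp add: nat_less_iff)

lemma reindex:
  assumes n: "n > 0"
  shows "(\<Sum>w<n. g (rr n (c - int w))) = (\<Sum>t<n. g t)"
proof -
  define h where "h w = rr n (c - int w)" for w
  have inj: "inj_on h {..<n}"
  proof (rule inj_onI)
    fix w w' assume w: "w \<in> {..<n}" "w' \<in> {..<n}" "h w = h w'"
    then have "(c - int w) mod int n = (c - int w') mod int n"
      using rr_int[OF n, of "c - int w"] rr_int[OF n, of "c - int w'"] unfolding h_def by simp
    then have "(c - (c - int w) mod int n) mod int n = (c - (c - int w') mod int n) mod int n" by simp
    then have "int w mod int n = int w' mod int n" unfolding mod_diff_right_eq by simp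
    then show "w = w'" using w by simp
  qed
  have sub: "h ` {..<n} \<subseteq> {..<n}" unfolding h_def using rr_lt[OF n] by auto
  have "h ` {..<n} = {..<n}" by (rule endo_inj_surj[OF _ sub inj]) simp
  then have "(\<Sum>t<n. g t) = sum g (h ` {..<n})" by simp
  also have "\<dots> = (\<Sum>w<n. g (h w))" by (simp add: sum.reindex[OF inj])
  finally show ?thesis unfolding h_def by simp
qed

lemma sum_split_add: "(\<Sum>t<a + (b::nat). g t) = (\<Sum>t<a. g t) + (\<Sum>t<b. g (a + t))"
  by (induction b) (simp_all add: algebra_simps)

definition D0 :: "nat \<Rightarrow> real" where "D0 n = (\<Sum>t<n. (xi n t)^2)"

lemma Xmat_diag: assumes "n > 0" shows "Xmat n p p = D0 n"
  unfolding Xmat_def D0_def xvec_eq using reindex[OF assms, of "\<lambda>t. (xi n t)^2" "int (fst p)"]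
  by (simp add: power2_eq_square)

lemma D0_pos: assumes "n \<ge> 2" shows "D0 n > 0"
proof -
  have "0 < (\<Sum>t<n. (xi n t)^2)"
    by (rule sum_pos2[of _ 1]) (use assms in \<open>auto simp: xi_def\<close>)
  then show ?thesis unfolding D0_def .
qed

lemma quad_gram:
  fixes x :: "'w \<Rightarrow> 'v \<Rightarrow> real"
  assumes "finite V" "finite W"
  shows "(\<Sum>p\<in>V. \<Sum>q\<in>V. z p * (\<Sum>w\<in>W. x w p * x w q) * z q) = (\<Sum>w\<in>W. (\<Sum>p\<in>V. z p * x w p)^2)"
proof -
  have "(\<Sum>p\<in>V. \<Sum>q\<in>V. z p * (\<Sum>w\<in>W. x w p * x w q) * z q)
      = (\<Sum>p\<in>V. \<Sum>q\<in>V. \<Sum>w\<in>W. (z p * x w p) * (z q * x w q))"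
    by (simp add: sum_distrib_left sum_distrib_right mult_ac)
  also have "\<dots> = (\<Sum>p\<in>V. \<Sum>w\<in>W. \<Sum>q\<in>V. (z p * x w p) * (z q * x w q))"
    by (intro sum.cong refl) (rule sum.swap)
  also have "\<dots> = (\<Sum>w\<in>W. \<Sum>p\<in>V. \<Sum>q\<in>V. (z p * x w p) * (z q * x w q))"
    by (rule sum.swap)
  also have "\<dots> = (\<Sum>w\<in>W. (\<Sum>p\<in>V. z p * x w p)^2)"
    by (simp add: power2_eq_square sum_product)
  finally show ?thesis .
qed

lemma Xhat_psd: assumes "n \<ge> 2" shows "psd (cverts n k) (Xhat n)"
  unfolding psd_def
proof (intro conjI ballI allI)
  fix p q show "Xhat n p q = Xhat n q p" unfolding Xhat_def Xmat_def by (simp add: mult.commute)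
next
  fix z :: "vtx \<Rightarrow> real"
  have D: "Dval n > 0" unfolding Dval_def using Xmat_diag D0_pos assms by simp
  have "(\<Sum>p\<in>cverts n k. \<Sum>q\<in>cverts n k. z p * Xhat n p q * z q)
      = (\<Sum>p\<in>cverts n k. \<Sum>q\<in>cverts n k. z p * Xmat n p q * z q) / Dval n"
    unfolding Xhat_def by (simp add: sum_divide_distrib)
  also have "(\<Sum>p\<in>cverts n k. \<Sum>q\<in>cverts n k. z p * Xmat n p q * z q)
      = (\<Sum>w<n. (\<Sum>p\<in>cverts n k. z p * xvec n w p)^2)"
    unfolding Xmat_def by (rule quad_gram) (simp_all add: fin_V)
  finally show "0 \<le> (\<Sum>p\<in>cverts n k. \<Sum>q\<in>cverts n k. z p * Xhat n p q * z q)"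
    using D by (simp add: sum_nonneg)
qed



definition Phi :: "nat \<Rightarrow> nat \<Rightarrow> vtx set set \<Rightarrow> real" where
  "Phi n k E = (\<Sum>p\<in>cverts n k. \<Sum>q\<in>cverts n k. if {p,q}\<in>E then Qf n p q else 0) / 2"

lemma Xmat_fun: "Xmat n = (\<lambda>p q. \<Sum>w\<in>{..<n}. xvec n w p * xvec n w q)"
  by (intro ext) (simp add: Xmat_def)

lemma inner_Phi:
  assumes "\<forall>e\<in>E. \<exists>a\<in>cverts n k. \<exists>b\<in>cverts n k. a \<noteq> b \<and> e = {a,b}"
  shows "inner_mat (cverts n k) (Xmat n) (lap E) = Phi n k E"
  unfolding Xmat_fun Phi_def Qf_def
  by (rule inner_lap_gram[OF fin_V _ assms]) simp

lemma inner_Xhat: "inner_mat V (Xhat n) B = inner_mat V (Xmat n) B / Dval n"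
  unfolding inner_mat_def Xhat_def by (simp add: sum_divide_distrib)

lemma Qf_nonneg: "Qf n p q \<ge> 0" unfolding Qf_def by (simp add: sum_nonneg)

lemma Qf_sym: "Qf n p q = Qf n q p" unfolding Qf_def by (simp add: power2_commute)

lemma Phi_insert: assumes "e \<notin> E" shows "Phi n k (insert e E) = Phi n k E + Phi n k {e}"
proof -
  have "(if {p,q} \<in> insert e E then Qf n p q else 0) =
        (if {p,q} \<in> E then Qf n p q else 0) + (if {p,q} \<in> {e} then Qf n p q else 0)" for p q
    using assms by auto
  then show ?thesis unfolding Phi_def by (simp add: sum.distrib add_divide_distrib)
qed

lemma Phi_mono: assumes "E \<subseteq> E'" shows "Phi n k E \<le> Phi n k E'"
proof -
  have "(if {p,q} \<in> E then Qf n p q else 0) \<le> (if {p,q} \<in> E' then Qf n p q else 0)" for p q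
    using assms Qf_nonneg[of n p q] by auto
  then show ?thesis unfolding Phi_def by (intro divide_right_mono sum_mono) auto
qed

lemma Phi_single:
  assumes a: "a \<in> cverts n k" and b: "b \<in> cverts n k" and ab: "a \<noteq> b"
  shows "Phi n k {{a,b}} = Qf n a b"
proof -
  have row: "(\<Sum>q\<in>cverts n k. if {p,q} \<in> {{a,b}} then Qf n p q else 0)
      = (if p = a then Qf n a b else 0) + (if p = b then Qf n b a else 0)" for p
  proof -
    have "(if {p,q} \<in> {{a,b}} then Qf n p q else 0)
       = (if q = b then (if p = a then Qf n p q else 0) else 0) + (if q = a then (if p = b then Qf n p q else 0) else 0)" for q
      using ab by (auto simp: doubleton_eq_iff)
    then have "(\<Sum>q\<in>cverts n k. if {p,q} \<in> {{a,b}} then Qf n p q else 0)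
       = (\<Sum>q\<in>cverts n k. if q = b then (if p = a then Qf n p q else 0) else 0)
        + (\<Sum>q\<in>cverts n k. if q = a then (if p = b then Qf n p q else 0) else 0)"
      by (simp only: sum.distrib)
    also have "\<dots> = (if p = a then Qf n a b else 0) + (if p = b then Qf n b a else 0)"
      by (simp only: sum.delta[OF fin_V]) (use a b in simp)
    finally show ?thesis .
  qed
  have "(\<Sum>p\<in>cverts n k. \<Sum>q\<in>cverts n k. if {p,q} \<in> {{a,b}} then Qf n p q else 0) = Qf n a b + Qf n b a"
    unfolding row sum.distrib sum.delta[OF fin_V] using a b by simp
  then show ?thesis unfolding Phi_def using Qf_sym[of n b a] by simp
qed

lemma sum_ind: "finite V \<Longrightarrow> a \<in> V \<Longrightarrow> (\<Sum>q\<in>V. f q * ind a q) = f a"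
  unfolding ind_def by (simp add: if_distrib cong: if_cong)

lemma inner_lap_edge:
  assumes fin: "finite V" and a: "a \<in> V" and b: "b \<in> V"
  shows "inner_mat V A (lap_edge a b) = A a a - A a b - A b a + A b b"
proof -
  have row: "(\<Sum>q\<in>V. A p q * lap_edge a b p q) = (ind a p - ind b p) * (A p a - A p b)" for p
  proof -
    have "(\<Sum>q\<in>V. A p q * lap_edge a b p q) =
          (\<Sum>q\<in>V. ((ind a p - ind b p) * A p q) * ind a q) - (\<Sum>q\<in>V. ((ind a p - ind b p) * A p q) * ind b q)"
      unfolding lap_edge_def by (simp add: sum_subtractf[symmetric] algebra_simps)
    also have "\<dots> = (ind a p - ind b p) * A p a - (ind a p - ind b p) * A p b"
      using sum_ind[OF fin a] sum_ind[OF fin b] by simp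
    finally show ?thesis by (simp add: algebra_simps)
  qed
  have "inner_mat V A (lap_edge a b) = (\<Sum>p\<in>V. (A p a - A p b) * ind a p) - (\<Sum>p\<in>V. (A p a - A p b) * ind b p)"
    unfolding inner_mat_def row by (simp add: sum_subtractf[symmetric] algebra_simps)
  also have "\<dots> = (A a a - A a b) - (A b a - A b b)"
    using sum_ind[OF fin a] sum_ind[OF fin b] by simp
  finally show ?thesis by simp
qed

lemma inner_estar_Q:
  assumes "a \<in> cverts n k" "b \<in> cverts n k"
  shows "inner_mat (cverts n k) (Xmat n) (lap_edge a b) = Qf n a b"
  unfolding inner_lap_edge[OF fin_V assms] Qf_def Xmat_def
  by (simp add: power2_eq_square sum_subtractf[symmetric] sum.distrib[symmetric] algebra_simps)



definition Aval :: "nat \<Rightarrow> real" where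
  "Aval n = 2 * (\<Sum>w<n div 2. (real n / 2 - 2 * real w)^2)"

lemma rr_succ: assumes "n > 0" shows "rr n (a + 1) = (rr n a + 1) mod n"
proof -
  have "int (rr n (a + 1)) = (a + 1) mod int n" using rr_int[OF assms] by simp
  also have "\<dots> = (a mod int n + 1) mod int n" by (simp add: mod_add_left_eq)
  also have "\<dots> = (int (rr n a) + 1) mod int n" using rr_int[OF assms] by simp
  also have "\<dots> = int ((rr n a + 1) mod n)" using zmod_int[of "rr n a + 1" n] by (simp add: ac_simps)
  finally show ?thesis by simp
qed

lemma xi_step:
  assumes ev: "even n" and n: "n \<ge> 2" and t: "t < n"
  shows "(xi n t - xi n ((t + 1) mod n))^2 = 1"
proof -
  obtain m where m: "n = m + m" using ev by (metis evenE mult_2)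
  show ?thesis
  proof (cases "t + 1 < n")
    case True
    then have e: "(t + 1) mod n = t + 1" by simp
    have "xi n t - xi n (t + 1) = -1 \<or> xi n t - xi n (t + 1) = 1"
    proof (cases "t < m")
      case True
      have h1: "t \<le> n - t" using m True by linarith
      have h2: "t + 1 \<le> n - (t + 1)" using m True by linarith
      have "xi n t = real t" unfolding xi_def using min_absorb1[OF h1] by simp
      moreover have "xi n (t + 1) = real t + 1" unfolding xi_def using min_absorb1[OF h2] by simp
      ultimately show ?thesis by simp
    next
      case False
      have h1: "n - t \<le> t" using m False by linarith
      have h2: "n - (t + 1) \<le> t + 1" using m False by linarith
      have h3: "n - t = (n - (t + 1)) + 1" using \<open>t + 1 < n\<close> by linarith
      have "xi n t = real (n - t)" unfolding xi_def using min_absorb2[OF h1] by simp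
      moreover have "xi n (t + 1) = real (n - (t + 1))" unfolding xi_def using min_absorb2[OF h2] by simp
      ultimately show ?thesis using h3 by simp
    qed
    then show ?thesis unfolding e by auto
  next
    case False
    then have "t + 1 = n" using t by simp
    then have e: "(t + 1) mod n = 0" by simp
    have "min t (n - t) = 1" using \<open>t + 1 = n\<close> n by linarith
    then show ?thesis unfolding e xi_def by simp
  qed
qed

lemma Q_adj:
  assumes ev: "even n" and n: "n \<ge> 4" and adj: "cadj n p q"
  shows "Qf n p q = real n"
proof -
  have n0: "n > 0" "n \<ge> 2" using n by auto
  have one: "(xvec n w p - xvec n w q)^2 = 1" for w
  proof -
    have md: "(a - c) mod int n = (b - c) mod int n" if "a mod int n = b mod int n" for a b c :: int
      using that by (metis mod_diff_left_eq)
    consider (A) "int (fst q) mod int n = (int (fst p) + 1) mod int n"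
      | (B) "int (fst q) mod int n = (int (fst p) - 1) mod int n" using adj unfolding cadj_def by blast
    then show ?thesis
    proof cases
      case A
      define a where "a = int (fst p) - int w"
      have "(int (fst q) - int w) mod int n = (int (fst p) + 1 - int w) mod int n" using md[OF A] .
      then have "rr n (int (fst q) - int w) = rr n (a + 1)" unfolding rr_def a_def by (simp add: algebra_simps)
      then have "xvec n w q = xi n ((rr n a + 1) mod n)" using xvec_eq rr_succ[OF n0(1)] by simp
      moreover have "xvec n w p = xi n (rr n a)" unfolding xvec_eq a_def by simp
      ultimately show ?thesis using xi_step[OF ev n0(2) rr_lt[OF n0(1)]] by simp
    next
      case B
      define b where "b = int (fst p) - 1 - int w"
      have "(int (fst q) - int w) mod int n = (int (fst p) - 1 - int w) mod int n" using md[OF B] .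
      then have "xvec n w q = xi n (rr n b)" unfolding xvec_eq rr_def b_def by simp
      moreover have "xvec n w p = xi n ((rr n b + 1) mod n)"
        unfolding xvec_eq b_def using rr_succ[OF n0(1), of "int (fst p) - 1 - int w"] by (simp add: algebra_simps)
      ultimately show ?thesis using xi_step[OF ev n0(2) rr_lt[OF n0(1)], of b] by (simp add: power2_commute)
    qed
  qed
  show ?thesis unfolding Qf_def one by simp
qed

lemma Phi_ring:
  assumes ev: "even n" and n: "n \<ge> 4"
  shows "Phi n k (ring_edges n k) = real n ^ 2 * real k ^ 2"
proof -
  have row: "(\<Sum>q\<in>cverts n k. if {p,q} \<in> ring_edges n k then Qf n p q else 0) = real n * (2 * real k)"
    if p: "p \<in> cverts n k" for p
  proof -
    have "(\<Sum>q\<in>cverts n k. if {p,q} \<in> ring_edges n k then Qf n p q else 0)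
        = (\<Sum>q\<in>cverts n k. real n * (if cadj n p q then 1 else 0))"
      using ring_mem[OF p] Q_adj[OF ev n] by (intro sum.cong refl) auto
    also have "\<dots> = real n * real (card {q\<in>cverts n k. cadj n p q})"
      by (simp add: sum_distrib_left[symmetric] card_filter_sum[OF fin_V])
    also have "card {q\<in>cverts n k. cadj n p q} = 2 * k" using card_nbrs[OF _ p] n by simp
    finally show ?thesis by simp
  qed
  have "Phi n k (ring_edges n k) = (\<Sum>p\<in>cverts n k. real n * (2 * real k)) / 2"
    unfolding Phi_def using row by simp
  also have "\<dots> = real (n * k) * real n * real k" by (simp add: card_V)
  finally show ?thesis by (simp add: power2_eq_square)
qed

lemma Q_estar:
  assumes ev: "even n" and n: "n \<ge> 4"
  shows "Qf n (0,1) (n div 2, 1) = Aval n"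
proof -
  define m where "m = n div 2"
  have nm: "n = m + m" using ev unfolding m_def by auto
  have n0: "n > 0" using n by simp
  have mr: "real n / 2 = real m" using nm by simp
  define g where "g t = (xi n t - xi n (rr n (int t + int m)))^2" for t
  have summand: "(xvec n w (0,1) - xvec n w (m,1))^2 = g (rr n (0 - int w))" for w
  proof -
    have e1: "((0 - int w) mod int n + int m) mod int n = ((0 - int w) + int m) mod int n"
      by (rule mod_add_left_eq)
    have e2: "(0 - int w) + int m = int m - int w" by simp
    have "rr n (int (rr n (0 - int w)) + int m) = rr n (int m - int w)"
      unfolding rr_int[OF n0] unfolding rr_def e1 e2 ..
    then show ?thesis unfolding g_def xvec_eq by simp
  qed
  have "Qf n (0,1) (m,1) = (\<Sum>w<n. g (rr n (0 - int w)))" unfolding Qf_def summand ..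
  also have "\<dots> = (\<Sum>t<n. g t)" by (rule reindex[OF n0])
  also have "\<dots> = (\<Sum>t<m. g t) + (\<Sum>t<m. g (m + t))" unfolding nm by (rule sum_split_add)
  also have "(\<Sum>t<m. g t) = (\<Sum>t<m. (real m - 2 * real t)^2)"
  proof (intro sum.cong refl)
    fix t assume "t \<in> {..<m}"
    then have t: "t < m" by simp
    have r0: "(t + m) mod n = t + m" using t nm by simp
    have "(int t + int m) mod int n = int ((t + m) mod n)" using zmod_int[of "t + m" n] by simp
    then have r: "rr n (int t + int m) = t + m" unfolding rr_def r0 by simp
    have a1: "xi n t = real t" unfolding xi_def using t nm by simp
    have a2: "xi n (t + m) = real m - real t" unfolding xi_def using t nm by simp
    show "g t = (real m - 2 * real t)^2" unfolding g_def r a1 a2 by (simp add: power2_eq_square algebra_simps)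
  qed
  also have "(\<Sum>t<m. g (m + t)) = (\<Sum>t<m. (real m - 2 * real t)^2)"
  proof (intro sum.cong refl)
    fix t assume "t \<in> {..<m}"
    then have t: "t < m" by simp
    have "int (m + t) + int m = int t + int n" using nm by simp
    moreover have "(int t + int n) mod int n = int t" using t nm by simp
    ultimately have r: "rr n (int (m + t) + int m) = t" unfolding rr_def by simp
    have a1: "xi n t = real t" unfolding xi_def using t nm by simp
    have a2: "xi n (m + t) = real m - real t" unfolding xi_def using t nm by simp
    show "g (m + t) = (real m - 2 * real t)^2" unfolding g_def r a1 a2 by (simp add: power2_eq_square algebra_simps)
  qed
  finally show ?thesis unfolding Aval_def m_def[symmetric] mr by simp
qed



lemma ev_evenF: "(\<And>n. n \<ge> N \<Longrightarrow> even n \<Longrightarrow> P n) \<Longrightarrow> eventually P evenF"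
  unfolding evenF_def eventually_inf_principal eventually_at_top_linorder by auto

lemma sum_w: "(\<Sum>w<m. real w) = real m * (real m - 1) / 2"
  by (induction m) (simp_all add: field_simps)

lemma sum_w2: "(\<Sum>w<m. real w ^ 2) = real m * (real m - 1) * (2 * real m - 1) / 6"
  by (induction m) (simp_all add: field_simps power2_eq_square)

lemma S_closed: "(\<Sum>w<m. (real m - 2 * real w)^2) = (real m ^ 3 + 2 * real m) / 3"
proof -
  have "(\<Sum>w<m. (real m - 2 * real w)^2) = (\<Sum>w<m. real m ^ 2 - 4 * real m * real w + 4 * real w ^ 2)"
    by (intro sum.cong refl) (simp add: power2_eq_square algebra_simps)
  also have "\<dots> = real m * real m ^ 2 - 4 * real m * (\<Sum>w<m. real w) + 4 * (\<Sum>w<m. real w ^ 2)"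
    by (simp add: sum.distrib sum_subtractf sum_distrib_left)
  also have "\<dots> = (real m ^ 3 + 2 * real m) / 3"
    unfolding sum_w sum_w2 by (simp add: field_simps power2_eq_square power3_eq_cube)
  finally show ?thesis .
qed

lemma Aval_closed: assumes "even n" shows "Aval n = real n ^ 3 / 12 + 2 * real n / 3"
proof -
  define m where "m = n div 2"
  have nm: "real n = 2 * real m" using assms unfolding m_def by auto
  have "real n / 2 = real m" using nm by simp
  then have "Aval n = 2 * (\<Sum>w<m. (real m - 2 * real w)^2)" unfolding Aval_def m_def[symmetric] by simp
  then have "Aval n = 2 * ((real m ^ 3 + 2 * real m) / 3)" unfolding S_closed .
  then show ?thesis unfolding nm by (simp add: field_simps power3_eq_cube)
qed

lemma Aval_theta: "Aval \<in> \<Theta>[evenF](\<lambda>n. real n ^ 3)"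
proof (rule bigthetaI'[of "1/12" 1])
  show "eventually (\<lambda>n. 1/12 * norm (real n ^ 3) \<le> norm (Aval n) \<and> norm (Aval n) \<le> 1 * norm (real n ^ 3)) evenF"
  proof (rule ev_evenF[of 1])
    fix n :: nat assume n: "n \<ge> 1" "even n"
    have r: "real n \<ge> 1" using n by simp
    have A: "Aval n = real n ^ 3 / 12 + 2 * real n / 3" using Aval_closed n by simp
    have "real n * 1 \<le> real n * (real n * real n)"
      by (rule mult_left_mono) (use r mult_mono[OF r r] in simp_all)
    then have le: "real n \<le> real n ^ 3" by (simp add: power3_eq_cube)
    have p3: "0 \<le> real n ^ 3" by simp
    have pA: "0 \<le> real n ^ 3 / 12 + 2 * real n / 3" by simp
    have "1/12 * real n ^ 3 \<le> real n ^ 3 / 12 + 2 * real n / 3 \<and> real n ^ 3 / 12 + 2 * real n / 3 \<le> 1 * real n ^ 3"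
      using le p3 by linarith
    then show "1/12 * norm (real n ^ 3) \<le> norm (Aval n) \<and> norm (Aval n) \<le> 1 * norm (real n ^ 3)"
      unfolding A real_norm_def abs_of_nonneg[OF p3] abs_of_nonneg[OF pA] .
  qed
qed simp_all



lemma Dval_eq: "n > 0 \<Longrightarrow> Dval n = D0 n" unfolding Dval_def using Xmat_diag by simp

lemma Aval_pos: "even n \<Longrightarrow> n \<ge> 4 \<Longrightarrow> Aval n > 0"
  using Aval_closed[of n] by (simp add: add_pos_nonneg)

lemma estar_pair: "n \<ge> 4 \<Longrightarrow> (0::nat, 1::nat) \<noteq> (n div 2, 1)" by auto

lemma Phi_estar:
  assumes ev: "even n" and n: "n \<ge> 4" and k: "1 \<le> k"
  shows "Phi n k {estar n} = Aval n"
  unfolding estar_def using Phi_single[OF estar_in[OF n k] estar_pair[OF n]] Q_estar[OF ev n] by simp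

lemma key_G:
  assumes ev: "even n" and n: "n \<ge> 4" and k: "1 \<le> k"
  shows "inner_mat (cverts n k) (Xhat n) (lap (G_edges n k)) = (Aval n + real n ^ 2 * real k ^ 2) / Dval n"
proof -
  have "inner_mat (cverts n k) (Xmat n) (lap (G_edges n k)) = Phi n k (G_edges n k)"
    by (rule inner_Phi[OF G_ok[OF n k]])
  also have "\<dots> = Phi n k (ring_edges n k) + Phi n k {estar n}"
    unfolding G_edges_def by (rule Phi_insert[OF estar_notin[OF n ev k]])
  also have "\<dots> = real n ^ 2 * real k ^ 2 + Aval n" using Phi_ring[OF ev n] Phi_estar[OF ev n k] by simp
  finally show ?thesis unfolding inner_Xhat by simp
qed

lemma key_E:
  assumes ev: "even n" and n: "n \<ge> 4" and k: "1 \<le> k"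
  shows "inner_mat (cverts n k) (Xhat n) (lap_edge (0, 1) (n div 2, 1)) = Aval n / Dval n"
  unfolding inner_Xhat inner_estar_Q[OF estar_in[OF n k]] Q_estar[OF ev n] ..

lemma key_H:
  assumes ev: "even n" and n: "n \<ge> 4" and k: "1 \<le> k" and H: "H \<subseteq> G_edges n k" "estar n \<in> H"
  shows "Aval n / Dval n \<le> inner_mat (cverts n k) (Xhat n) (lap H)"
proof -
  have ok: "\<forall>e\<in>H. \<exists>a\<in>cverts n k. \<exists>b\<in>cverts n k. a \<noteq> b \<and> e = {a,b}"
    using G_ok[OF n k] H(1) by blast
  have D: "Dval n > 0" using Dval_eq D0_pos n by simp
  have "Aval n = Phi n k {estar n}" using Phi_estar[OF ev n k] by simp
  also have "\<dots> \<le> Phi n k H" by (rule Phi_mono) (use H in simp)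
  also have "\<dots> = inner_mat (cverts n k) (Xmat n) (lap H)" using inner_Phi[OF ok] by simp
  finally show ?thesis unfolding inner_Xhat using D by (simp add: divide_right_mono)
qed

definition eps :: "(nat \<Rightarrow> nat) \<Rightarrow> nat \<Rightarrow> real" where
  "eps kk n = real n ^ 2 * real (kk n) ^ 2 / (Aval n + real n ^ 2 * real (kk n) ^ 2)"

lemma eps_eq:
  assumes ev: "even n" and n: "n \<ge> 4" and k: "1 \<le> kk n"
  shows "(1 - eps kk n) * ((Aval n + real n ^ 2 * real (kk n) ^ 2) / Dval n) = Aval n / Dval n"
proof -
  have A: "Aval n > 0" using Aval_pos ev n by simp
  define B where "B = real n ^ 2 * real (kk n) ^ 2"
  have S: "Aval n + B > 0" using A unfolding B_def by (simp add: add_pos_nonneg)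
  have "1 - B / (Aval n + B) = Aval n / (Aval n + B)" using S by (simp add: field_simps)
  then have "(1 - B / (Aval n + B)) * ((Aval n + B) / Dval n) = Aval n / Dval n" using S by simp
  then show ?thesis unfolding eps_def B_def .
qed

lemma real_bound:
  fixes N K A e :: real
  assumes N: "N \<ge> 1" and K: "K \<ge> 0" and A: "A \<ge> N ^ 3 / 12" and KK: "K ^ 2 \<le> (e / 24) * N" and e: "e > 0"
  shows "N ^ 2 * K ^ 2 / (A + N ^ 2 * K ^ 2) < e"
proof -
  have N3: "N ^ 3 / 12 > 0" using N by simp
  have B: "N ^ 2 * K ^ 2 \<ge> 0" by simp
  have "N ^ 2 * K ^ 2 / (A + N ^ 2 * K ^ 2) \<le> N ^ 2 * K ^ 2 / (N ^ 3 / 12)"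
    by (rule frac_le) (use N3 A B in linarith)+
  also have "\<dots> = 12 * K ^ 2 / N" using N by (simp add: field_simps power2_eq_square power3_eq_cube)
  also have "\<dots> \<le> 12 * ((e / 24) * N) / N"
  proof (rule divide_right_mono)
    show "12 * K ^ 2 \<le> 12 * ((e / 24) * N)" using KK by linarith
  qed (use N in simp)
  also have "\<dots> = e / 2" using N by simp
  also have "\<dots> < e" using e by simp
  finally show ?thesis .
qed

lemma eps_tendsto:
  assumes kk1: "\<forall>n. 1 \<le> kk n" and o: "(\<lambda>n. real (kk n)) \<in> o[evenF](\<lambda>n. sqrt (real n))"
  shows "(eps kk \<longlongrightarrow> 0) evenF"
proof (rule tendstoI)
  fix e :: real assume e: "e > 0"
  define c where "c = sqrt (e / 24)"
  have c: "c > 0" using e unfolding c_def by simp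
  have ev1: "eventually (\<lambda>n. norm (real (kk n)) \<le> c * norm (sqrt (real n))) evenF"
    by (rule landau_o.smallD[OF o c])
  have ev2: "eventually (\<lambda>n. n \<ge> 4 \<and> even n) evenF" by (rule ev_evenF[of 4]) simp
  show "eventually (\<lambda>n. dist (eps kk n) 0 < e) evenF"
    using eventually_conj[OF ev1 ev2]
  proof (rule eventually_mono)
    fix n assume h: "norm (real (kk n)) \<le> c * norm (sqrt (real n)) \<and> n \<ge> 4 \<and> even n"
    have kc: "real (kk n) \<le> c * sqrt (real n)" using h by simp
    have "real (kk n) ^ 2 \<le> (c * sqrt (real n)) ^ 2" by (rule power_mono[OF kc]) simp
    also have "\<dots> = (e / 24) * real n" using e unfolding c_def by (simp add: power_mult_distrib)
    finally have KK: "real (kk n) ^ 2 \<le> (e / 24) * real n" .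
    have A: "Aval n \<ge> real n ^ 3 / 12" using Aval_closed[of n] h by simp
    have lt: "eps kk n < e" unfolding eps_def by (rule real_bound[OF _ _ A KK e]) (use h in simp_all)
    have "eps kk n \<ge> 0" unfolding eps_def using Aval_pos[of n] h by (simp add: add_pos_nonneg)
    then show "dist (eps kk n) 0 < e" using lt by simp
  qed
qed

lemma prob_edge:
  assumes fin: "finite E" and x: "x \<in> E" and p: "0 \<le> p" "p \<le> 1"
  shows "measure_pmf.prob (Pi_pmf E False (\<lambda>_. bernoulli_pmf p)) {f. f x} = p"
proof -
  have "{f. f x} = (\<lambda>f. f x) -` {True}" by auto
  then have "measure_pmf.prob (Pi_pmf E False (\<lambda>_. bernoulli_pmf p)) {f. f x}
      = measure_pmf.prob (map_pmf (\<lambda>f. f x) (Pi_pmf E False (\<lambda>_. bernoulli_pmf p))) {True}"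
    by simp
  also have "\<dots> = measure_pmf.prob (bernoulli_pmf p) {True}"
    unfolding Pi_pmf_component[OF fin] using x by simp
  also have "\<dots> = p" using p by (simp add: measure_pmf_single)
  finally show ?thesis .
qed



theorem mainTheorem17:
  shows
  "(\<forall>n k. even n \<and> 4 \<le> n \<and> 1 \<le> k \<longrightarrow>
      (\<forall>v\<in>cverts n k. 2 * k \<le> deg (G_edges n k) v) \<and>
      min_cut (cverts n k) (G_edges n k) = 2 * k \<and>
      (\<forall>v\<in>cverts n k. Xmat n v v = Dval n) \<and> Dval n > 0 \<and>
      psd (cverts n k) (Xhat n) \<and> (\<forall>v\<in>cverts n k. Xhat n v v = 1) \<and>
      inner_mat (cverts n k) (Xmat n) (lap_edge (0, 1) (n div 2, 1))
        = 2 * (\<Sum>w<n div 2. (real n / 2 - 2 * real w)^2) \<and>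
      inner_mat (cverts n k) (Xmat n) (lap (G_edges n k - {estar n}))
        = real n ^ 2 * real k ^ 2)
   \<and> (\<lambda>n. 2 * (\<Sum>w<n div 2. (real n / 2 - 2 * real w)^2)) \<in> \<Theta>[evenF](\<lambda>n. real n ^ 3)
   \<and> (\<forall>kk :: nat \<Rightarrow> nat. (\<forall>n. 1 \<le> kk n) \<and>
        (\<lambda>n. real (kk n)) \<in> o[evenF](\<lambda>n. sqrt (real n)) \<longrightarrow>
      (\<exists>\<epsilon> :: nat \<Rightarrow> real. (\<epsilon> \<longlongrightarrow> 0) evenF \<and>
         (\<forall>\<^sub>F n in evenF.
            inner_mat (cverts n (kk n)) (Xhat n) (lap_edge (0, 1) (n div 2, 1))
            \<ge> (1 - \<epsilon> n) * inner_mat (cverts n (kk n)) (Xhat n) (lap (G_edges n (kk n)))))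
      \<and> (\<forall>\<eta>::real. 0 < \<eta> \<and> \<eta> < 1 \<longrightarrow>
          (\<exists>\<epsilon> :: nat \<Rightarrow> real. (\<epsilon> \<longlongrightarrow> 0) evenF \<and>
            (\<forall>\<^sub>F n in evenF.
               measure_pmf.prob (Pi_pmf (G_edges n (kk n)) False (\<lambda>_. bernoulli_pmf \<eta>))
                 {f. inner_mat (cverts n (kk n)) (Xhat n) (lap {e \<in> G_edges n (kk n). f e})
                     \<ge> (1 - \<epsilon> n) * inner_mat (cverts n (kk n)) (Xhat n) (lap (G_edges n (kk n)))}
               \<ge> \<eta>))))"
proof -
  have P1: "\<forall>n k. even n \<and> 4 \<le> n \<and> 1 \<le> k \<longrightarrow>
      (\<forall>v\<in>cverts n k. 2 * k \<le> deg (G_edges n k) v) \<and>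
      min_cut (cverts n k) (G_edges n k) = 2 * k \<and>
      (\<forall>v\<in>cverts n k. Xmat n v v = Dval n) \<and> Dval n > 0 \<and>
      psd (cverts n k) (Xhat n) \<and> (\<forall>v\<in>cverts n k. Xhat n v v = 1) \<and>
      inner_mat (cverts n k) (Xmat n) (lap_edge (0, 1) (n div 2, 1))
        = 2 * (\<Sum>w<n div 2. (real n / 2 - 2 * real w)^2) \<and>
      inner_mat (cverts n k) (Xmat n) (lap (G_edges n k - {estar n}))
        = real n ^ 2 * real k ^ 2"
  proof (intro allI impI)
    fix n k :: nat assume h: "even n \<and> 4 \<le> n \<and> 1 \<le> k"
    then have ev: "even n" and n: "4 \<le> n" and k: "1 \<le> k" by auto
    have D: "Dval n > 0" using Dval_eq D0_pos n by simp
    have diag: "\<forall>v\<in>cverts n k. Xmat n v v = Dval n" using Xmat_diag Dval_eq n by simp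
    have hat: "\<forall>v\<in>cverts n k. Xhat n v v = 1" using diag D unfolding Xhat_def by simp
    have e: "inner_mat (cverts n k) (Xmat n) (lap_edge (0, 1) (n div 2, 1))
        = 2 * (\<Sum>w<n div 2. (real n / 2 - 2 * real w)^2)"
      using inner_estar_Q[OF estar_in[OF n k]] Q_estar[OF ev n] unfolding Aval_def by simp
    have r: "inner_mat (cverts n k) (Xmat n) (lap (G_edges n k - {estar n})) = real n ^ 2 * real k ^ 2"
    proof -
      have "inner_mat (cverts n k) (Xmat n) (lap (ring_edges n k)) = Phi n k (ring_edges n k)"
        by (rule inner_Phi[OF ring_ok]) (use n in simp)
      then show ?thesis unfolding G_minus[OF n ev k] using Phi_ring[OF ev n] by simp
    qed
    show "(\<forall>v\<in>cverts n k. 2 * k \<le> deg (G_edges n k) v) \<and>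
      min_cut (cverts n k) (G_edges n k) = 2 * k \<and>
      (\<forall>v\<in>cverts n k. Xmat n v v = Dval n) \<and> Dval n > 0 \<and>
      psd (cverts n k) (Xhat n) \<and> (\<forall>v\<in>cverts n k. Xhat n v v = 1) \<and>
      inner_mat (cverts n k) (Xmat n) (lap_edge (0, 1) (n div 2, 1))
        = 2 * (\<Sum>w<n div 2. (real n / 2 - 2 * real w)^2) \<and>
      inner_mat (cverts n k) (Xmat n) (lap (G_edges n k - {estar n}))
        = real n ^ 2 * real k ^ 2"
      using deg_G[OF n] min_cut_G[OF n k] diag D Xhat_psd[of n k] n hat e r by simp
  qed
  have fe: "(\<lambda>n. 2 * (\<Sum>w<n div 2. (real n / 2 - 2 * real w)^2)) = Aval"
    by (rule ext) (simp add: Aval_def)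
  have P2: "(\<lambda>n. 2 * (\<Sum>w<n div 2. (real n / 2 - 2 * real w)^2)) \<in> \<Theta>[evenF](\<lambda>n. real n ^ 3)"
    unfolding fe by (rule Aval_theta)
  have P3: "\<forall>kk :: nat \<Rightarrow> nat. (\<forall>n. 1 \<le> kk n) \<and>
        (\<lambda>n. real (kk n)) \<in> o[evenF](\<lambda>n. sqrt (real n)) \<longrightarrow>
      (\<exists>\<epsilon> :: nat \<Rightarrow> real. (\<epsilon> \<longlongrightarrow> 0) evenF \<and>
         (\<forall>\<^sub>F n in evenF.
            inner_mat (cverts n (kk n)) (Xhat n) (lap_edge (0, 1) (n div 2, 1))
            \<ge> (1 - \<epsilon> n) * inner_mat (cverts n (kk n)) (Xhat n) (lap (G_edges n (kk n)))))
      \<and> (\<forall>\<eta>::real. 0 < \<eta> \<and> \<eta> < 1 \<longrightarrow>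
          (\<exists>\<epsilon> :: nat \<Rightarrow> real. (\<epsilon> \<longlongrightarrow> 0) evenF \<and>
            (\<forall>\<^sub>F n in evenF.
               measure_pmf.prob (Pi_pmf (G_edges n (kk n)) False (\<lambda>_. bernoulli_pmf \<eta>))
                 {f. inner_mat (cverts n (kk n)) (Xhat n) (lap {e \<in> G_edges n (kk n). f e})
                     \<ge> (1 - \<epsilon> n) * inner_mat (cverts n (kk n)) (Xhat n) (lap (G_edges n (kk n)))}
               \<ge> \<eta>)))"
  proof (intro allI impI)
    fix kk :: "nat \<Rightarrow> nat"
    assume h: "(\<forall>n. 1 \<le> kk n) \<and> (\<lambda>n. real (kk n)) \<in> o[evenF](\<lambda>n. sqrt (real n))"
    have kk1: "\<forall>n. 1 \<le> kk n" using h by simp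
    have lim: "(eps kk \<longlongrightarrow> 0) evenF" using eps_tendsto[OF kk1] h by simp
    have eqG: "(1 - eps kk n) * inner_mat (cverts n (kk n)) (Xhat n) (lap (G_edges n (kk n))) = Aval n / Dval n"
      if "n \<ge> 4" "even n" for n
      using key_G[OF that(2,1) kk1[rule_format, of n]] eps_eq[of n kk, OF that(2,1) kk1[rule_format, of n]] by simp
    show "(\<exists>\<epsilon> :: nat \<Rightarrow> real. (\<epsilon> \<longlongrightarrow> 0) evenF \<and>
         (\<forall>\<^sub>F n in evenF.
            inner_mat (cverts n (kk n)) (Xhat n) (lap_edge (0, 1) (n div 2, 1))
            \<ge> (1 - \<epsilon> n) * inner_mat (cverts n (kk n)) (Xhat n) (lap (G_edges n (kk n)))))
      \<and> (\<forall>\<eta>::real. 0 < \<eta> \<and> \<eta> < 1 \<longrightarrow>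
          (\<exists>\<epsilon> :: nat \<Rightarrow> real. (\<epsilon> \<longlongrightarrow> 0) evenF \<and>
            (\<forall>\<^sub>F n in evenF.
               measure_pmf.prob (Pi_pmf (G_edges n (kk n)) False (\<lambda>_. bernoulli_pmf \<eta>))
                 {f. inner_mat (cverts n (kk n)) (Xhat n) (lap {e \<in> G_edges n (kk n). f e})
                     \<ge> (1 - \<epsilon> n) * inner_mat (cverts n (kk n)) (Xhat n) (lap (G_edges n (kk n)))}
               \<ge> \<eta>)))"
    proof (intro conjI allI impI)
      show "\<exists>\<epsilon> :: nat \<Rightarrow> real. (\<epsilon> \<longlongrightarrow> 0) evenF \<and>
         (\<forall>\<^sub>F n in evenF.
            inner_mat (cverts n (kk n)) (Xhat n) (lap_edge (0, 1) (n div 2, 1))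
            \<ge> (1 - \<epsilon> n) * inner_mat (cverts n (kk n)) (Xhat n) (lap (G_edges n (kk n))))"
      proof (intro exI conjI)
        show "(eps kk \<longlongrightarrow> 0) evenF" by (rule lim)
        show "\<forall>\<^sub>F n in evenF.
            inner_mat (cverts n (kk n)) (Xhat n) (lap_edge (0, 1) (n div 2, 1))
            \<ge> (1 - eps kk n) * inner_mat (cverts n (kk n)) (Xhat n) (lap (G_edges n (kk n)))"
        proof (rule ev_evenF[of 4])
          fix n :: nat assume n: "n \<ge> 4" "even n"
          show "inner_mat (cverts n (kk n)) (Xhat n) (lap_edge (0, 1) (n div 2, 1))
            \<ge> (1 - eps kk n) * inner_mat (cverts n (kk n)) (Xhat n) (lap (G_edges n (kk n)))"
            using eqG[OF n] key_E[OF n(2,1) kk1[rule_format, of n]] by simp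
        qed
      qed
    next
      fix \<eta> :: real assume eta: "0 < \<eta> \<and> \<eta> < 1"
      show "\<exists>\<epsilon> :: nat \<Rightarrow> real. (\<epsilon> \<longlongrightarrow> 0) evenF \<and>
            (\<forall>\<^sub>F n in evenF.
               measure_pmf.prob (Pi_pmf (G_edges n (kk n)) False (\<lambda>_. bernoulli_pmf \<eta>))
                 {f. inner_mat (cverts n (kk n)) (Xhat n) (lap {e \<in> G_edges n (kk n). f e})
                     \<ge> (1 - \<epsilon> n) * inner_mat (cverts n (kk n)) (Xhat n) (lap (G_edges n (kk n)))}
               \<ge> \<eta>)"
      proof (intro exI conjI)
        show "(eps kk \<longlongrightarrow> 0) evenF" by (rule lim)
        show "\<forall>\<^sub>F n in evenF.
               measure_pmf.prob (Pi_pmf (G_edges n (kk n)) False (\<lambda>_. bernoulli_pmf \<eta>))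
                 {f. inner_mat (cverts n (kk n)) (Xhat n) (lap {e \<in> G_edges n (kk n). f e})
                     \<ge> (1 - eps kk n) * inner_mat (cverts n (kk n)) (Xhat n) (lap (G_edges n (kk n)))}
               \<ge> \<eta>"
        proof (rule ev_evenF[of 4])
          fix n :: nat assume n: "n \<ge> 4" "even n"
          define M where "M = Pi_pmf (G_edges n (kk n)) False (\<lambda>_. bernoulli_pmf \<eta>)"
          have sub: "{f. f (estar n)} \<subseteq> {f. inner_mat (cverts n (kk n)) (Xhat n) (lap {e \<in> G_edges n (kk n). f e})
                     \<ge> (1 - eps kk n) * inner_mat (cverts n (kk n)) (Xhat n) (lap (G_edges n (kk n)))}"
          proof
            fix f :: "vtx set \<Rightarrow> bool" assume "f \<in> {f. f (estar n)}"
            then have "estar n \<in> {e \<in> G_edges n (kk n). f e}" unfolding G_edges_def by simp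
            then have "Aval n / Dval n \<le> inner_mat (cverts n (kk n)) (Xhat n) (lap {e \<in> G_edges n (kk n). f e})"
              by (intro key_H[OF n(2,1) kk1[rule_format, of n]]) auto
            then show "f \<in> {f. inner_mat (cverts n (kk n)) (Xhat n) (lap {e \<in> G_edges n (kk n). f e})
                     \<ge> (1 - eps kk n) * inner_mat (cverts n (kk n)) (Xhat n) (lap (G_edges n (kk n)))}"
              using eqG[OF n] by simp
          qed
          have "\<eta> = measure_pmf.prob M {f. f (estar n)}"
            unfolding M_def using prob_edge[OF fin_G[of n "kk n"], of "estar n" \<eta>] eta unfolding G_edges_def by simp
          also have "\<dots> \<le> measure_pmf.prob M {f. inner_mat (cverts n (kk n)) (Xhat n) (lap {e \<in> G_edges n (kk n). f e})
                     \<ge> (1 - eps kk n) * inner_mat (cverts n (kk n)) (Xhat n) (lap (G_edges n (kk n)))}"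
            by (rule measure_pmf.finite_measure_mono[OF sub]) simp
          finally show "measure_pmf.prob (Pi_pmf (G_edges n (kk n)) False (\<lambda>_. bernoulli_pmf \<eta>))
                 {f. inner_mat (cverts n (kk n)) (Xhat n) (lap {e \<in> G_edges n (kk n). f e})
                     \<ge> (1 - eps kk n) * inner_mat (cverts n (kk n)) (Xhat n) (lap (G_edges n (kk n)))}
               \<ge> \<eta>" unfolding M_def .
        qed
      qed
    qed
  qed
  show ?thesis using P1 P2 P3 by blast
qed


end
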